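(* Let $(\vdash,\overline{\cdot},\widehat{\cdot})$ be a setting satisfying Pre-Relevance, let $\mathcal{S},\mathcal{S}'\subseteq\mathcal{L}$ with $\mathcal{S}\mid\mathcal{S}'$, let $\mathcal{E}_1$ be a complete extension of $\mathcal{AF}_{\vdash}(\mathcal{S})$, $\mathcal{E}_2$ a complete extension of $\mathcal{AF}_{\vdash}(\mathcal{S}')$, and $\mathcal{E}=\mathsf{Defended}(\mathcal{E}_1\cup\mathcal{E}_2,\mathcal{AF}_{\vdash}(\mathcal{S}\cup\mathcal{S}'))$. Then (1) $\mathcal{E}\cap\mathit{Arg}_{\vdash}(\mathcal{S})=\mathcal{E}_1$ and $\mathcal{E}\cap\mathit{Arg}_{\vdash}(\mathcal{S}')=\mathcal{E}_2$, and (2) $\mathcal{E}$ is a complete extension of $\mathcal{AF}_{\vdash}(\mathcal{S}\cup\mathcal{S}')$.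
   Context: $\mathcal{L}$ is the set of formulas of a language built from propositional atoms; $\mathsf{Atoms}(\mathcal{S})$ is the set of atoms occurring in $\mathcal{S}$, and $\mathcal{S}_1\mid\mathcal{S}_2$ means $\mathsf{Atoms}(\mathcal{S}_1)\cap\mathsf{Atoms}(\mathcal{S}_2)=\emptyset$. A setting is $(\vdash,\overline{\cdot},\widehat{\cdot})$ with ${\vdash}\subseteq\wp_{\sf fin}(\mathcal{L})\times\mathcal{L}$ arbitrary, $\overline{\cdot}:\mathcal{L}\to\wp(\mathcal{L})$, $\widehat{\cdot}$ assigning to each nonempty finite set a finite set of formulas, with $\widehat{\emptyset}=\emptyset$. $\mathit{Arg}_{\vdash}(\mathcal{S})=\{(\Gamma,\gamma):\Gamma\subseteq\mathcal{S}\text{ finite},\Gamma\vdash\gamma\}$; $\mathcal{AF}_{\vdash}(\mathcal{S})$ is the attack graph on it where $(\Gamma,\gamma)$ attacks $(\Gamma',\gamma')$ iff $\gamma\in\overline{\phi}$ for some $\phi\in\widehat{\Gamma'}$. $\mathcal{A}$ defends $a$ iff every attacker of $a$ in the framework is attacked by a member of $\mathcal{A}$; $\mathsf{Defended}(\mathcal{A},\mathcal{AF}_{\vdash}(\mathcal{S}))$ is the set of arguments of $\mathit{Arg}_{\vdash}(\mathcal{S})$ defended by $\mathcal{A}$. Complete = conflict-free, defends all its members, and contains every argument it defends. Pre-Relevance of the setting: (a) for all $\mathcal{S}_1,\mathcal{S}_2,\phi$ with $\mathcal{S}_1\cup\{\phi\}\mid\mathcal{S}_2$, $\mathcal{S}_1\cup\mathcal{S}_2\vdash\phi$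 implies $\mathcal{S}_1'\vdash\phi$ for some $\mathcal{S}_1'\subseteq\mathcal{S}_1$; (b) primeness: for all sets of atoms $\mathcal{A}_1\mid\mathcal{A}_2$, all finite $\mathcal{S}_1,\mathcal{T}_1,\mathcal{S}_2,\mathcal{T}_2$ with $\mathsf{Atoms}(\mathcal{S}_i),\mathsf{Atoms}(\mathcal{T}_i)\subseteq\mathcal{A}_i$, and all $\phi,\psi$ with $\psi\in\overline{\phi}$, $\phi\in\widehat{\mathcal{T}_1\cup\mathcal{T}_2}$: if $\mathcal{S}_1\cup\mathcal{S}_2\vdash\psi$ then there are $i\in\{1,2\}$, $\mathcal{S}_i'\subseteq\mathcal{S}_i$, $\phi_i\in\widehat{\mathcal{T}_i}$, $\psi_i\in\overline{\phi_i}$ with $\mathcal{S}_i'\vdash\psi_i$; (c) $\widehat{\Delta}\subseteq\widehat{\Delta\cup\Delta'}$ for all finite $\Delta,\Delta'$. *)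

theory Defs
  imports Main
begin

text \<open>A setting is given by vd (the relation |-), ctr (the contrariness operator
  overline) and hat (the hat operator).\<close>

definition Atoms :: "('f \<Rightarrow> 'a set) \<Rightarrow> 'f set \<Rightarrow> 'a set" where
  "Atoms atoms S = (\<Union>x\<in>S. atoms x)"

definition indep :: "('f \<Rightarrow> 'a set) \<Rightarrow> 'f set \<Rightarrow> 'f set \<Rightarrow> bool" where
  "indep atoms S1 S2 \<longleftrightarrow> Atoms atoms S1 \<inter> Atoms atoms S2 = {}"

definition setting :: "('f set \<Rightarrow> 'f \<Rightarrow> bool) \<Rightarrow> ('f \<Rightarrow> 'f set) \<Rightarrow> ('f set \<Rightarrow> 'f set) \<Rightarrow> bool" where
  "setting vd ctr hat \<longleftrightarrow>
     (\<forall>\<Gamma> \<gamma>. vd \<Gamma> \<gamma> \<longrightarrow> finite \<Gamma>) \<and>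
     (\<forall>\<Delta>. finite \<Delta> \<longrightarrow> finite (hat \<Delta>)) \<and>
     hat {} = {}"

definition pre_relevance ::
  "('f \<Rightarrow> 'a set) \<Rightarrow> ('f set \<Rightarrow> 'f \<Rightarrow> bool) \<Rightarrow> ('f \<Rightarrow> 'f set) \<Rightarrow> ('f set \<Rightarrow> 'f set) \<Rightarrow> bool" where
  "pre_relevance atoms vd ctr hat \<longleftrightarrow>
     \<comment> \<open>(a)\<close>
     (\<forall>S1 S2 \<phi>. indep atoms (S1 \<union> {\<phi>}) S2 \<longrightarrow> vd (S1 \<union> S2) \<phi> \<longrightarrow>
        (\<exists>S1'. S1' \<subseteq> S1 \<and> vd S1' \<phi>)) \<and>
     \<comment> \<open>(b) primeness\<close>
     (\<forall>A1 A2 S1 T1 S2 T2 \<phi> \<psi>.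
        A1 \<inter> A2 = {} \<longrightarrow>
        finite S1 \<longrightarrow> finite T1 \<longrightarrow> finite S2 \<longrightarrow> finite T2 \<longrightarrow>
        Atoms atoms S1 \<subseteq> A1 \<longrightarrow> Atoms atoms T1 \<subseteq> A1 \<longrightarrow>
        Atoms atoms S2 \<subseteq> A2 \<longrightarrow> Atoms atoms T2 \<subseteq> A2 \<longrightarrow>
        \<psi> \<in> ctr \<phi> \<longrightarrow> \<phi> \<in> hat (T1 \<union> T2) \<longrightarrow> vd (S1 \<union> S2) \<psi> \<longrightarrow>
        (\<exists>S1' \<phi>1 \<psi>1. S1' \<subseteq> S1 \<and> \<phi>1 \<in> hat T1 \<and> \<psi>1 \<in> ctr \<phi>1 \<and> vd S1' \<psi>1) \<or>
        (\<exists>S2' \<phi>2 \<psi>2. S2' \<subseteq> S2 \<and> \<phi>2 \<in> hat T2 \<and> \<psi>2 \<in> ctr \<phi>2 \<and> vd S2' \<psi>2)) \<and>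
     \<comment> \<open>(c)\<close>
     (\<forall>\<Delta> \<Delta>'. finite \<Delta> \<longrightarrow> finite \<Delta>' \<longrightarrow> hat \<Delta> \<subseteq> hat (\<Delta> \<union> \<Delta>'))"

type_synonym 'f arg = "'f set \<times> 'f"

definition Arg :: "('f set \<Rightarrow> 'f \<Rightarrow> bool) \<Rightarrow> 'f set \<Rightarrow> 'f arg set" where
  "Arg vd S = {(\<Gamma>, \<gamma>). \<Gamma> \<subseteq> S \<and> finite \<Gamma> \<and> vd \<Gamma> \<gamma>}"

definition attacks :: "('f \<Rightarrow> 'f set) \<Rightarrow> ('f set \<Rightarrow> 'f set) \<Rightarrow> 'f arg \<Rightarrow> 'f arg \<Rightarrow> bool" where
  "attacks ctr hat a b \<longleftrightarrow> (\<exists>\<phi>\<in>hat (fst b). snd a \<in> ctr \<phi>)"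

text \<open>Notions relative to the framework AF(S) = (Arg S, attacks).\<close>
definition defends ::
  "('f set \<Rightarrow> 'f \<Rightarrow> bool) \<Rightarrow> ('f \<Rightarrow> 'f set) \<Rightarrow> ('f set \<Rightarrow> 'f set) \<Rightarrow> 'f set \<Rightarrow> 'f arg set \<Rightarrow> 'f arg \<Rightarrow> bool" where
  "defends vd ctr hat S E a \<longleftrightarrow>
     (\<forall>b\<in>Arg vd S. attacks ctr hat b a \<longrightarrow> (\<exists>c\<in>E. attacks ctr hat c b))"

definition Defended ::
  "('f set \<Rightarrow> 'f \<Rightarrow> bool) \<Rightarrow> ('f \<Rightarrow> 'f set) \<Rightarrow> ('f set \<Rightarrow> 'f set) \<Rightarrow> 'f set \<Rightarrow> 'f arg set \<Rightarrow> 'f arg set" where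
  "Defended vd ctr hat S E = {a \<in> Arg vd S. defends vd ctr hat S E a}"

definition conflict_free :: "('f \<Rightarrow> 'f set) \<Rightarrow> ('f set \<Rightarrow> 'f set) \<Rightarrow> 'f arg set \<Rightarrow> bool" where
  "conflict_free ctr hat E \<longleftrightarrow> (\<forall>a\<in>E. \<forall>b\<in>E. \<not> attacks ctr hat a b)"

definition complete_ext ::
  "('f set \<Rightarrow> 'f \<Rightarrow> bool) \<Rightarrow> ('f \<Rightarrow> 'f set) \<Rightarrow> ('f set \<Rightarrow> 'f set) \<Rightarrow> 'f set \<Rightarrow> 'f arg set \<Rightarrow> bool" where
  "complete_ext vd ctr hat S E \<longleftrightarrow>
     E \<subseteq> Arg vd S \<and> conflict_free ctr hat E \<and>
     (\<forall>a\<in>E. defends vd ctr hat S E a) \<and>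
     (\<forall>a\<in>Arg vd S. defends vd ctr hat S E a \<longrightarrow> a \<in> E)"

end

theory Submission
  imports Defs
begin

lemma Atoms_mono: "A \<subseteq> B \<Longrightarrow> Atoms atoms A \<subseteq> Atoms atoms B"
  unfolding Atoms_def by auto

lemma hat_mono:
  assumes "pre_relevance atoms vd ctr hat" "finite B" "A \<subseteq> B"
  shows "hat A \<subseteq> hat B"
proof -
  have "finite A" using assms finite_subset by blast
  then have "hat A \<subseteq> hat (A \<union> B)"
    using conjunct2[OF conjunct2[OF assms(1)[unfolded pre_relevance_def]]] assms(2) by blast
  moreover have "A \<union> B = B" using assms by blast
  ultimately show ?thesis by simp
qed

lemma att_mono:
  assumes "pre_relevance atoms vd ctr hat" "finite (fst c)" "fst c1 \<subseteq> fst c"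
    "attacks ctr hat d c1"
  shows "attacks ctr hat d c"
  using assms hat_mono[OF assms(1-3)] unfolding attacks_def by blast

lemma prime:
  assumes "pre_relevance atoms vd ctr hat"
  shows "\<forall>A1 A2 S1 T1 S2 T2 \<phi> \<psi>.
        A1 \<inter> A2 = {} \<longrightarrow>
        finite S1 \<longrightarrow> finite T1 \<longrightarrow> finite S2 \<longrightarrow> finite T2 \<longrightarrow>
        Atoms atoms S1 \<subseteq> A1 \<longrightarrow> Atoms atoms T1 \<subseteq> A1 \<longrightarrow>
        Atoms atoms S2 \<subseteq> A2 \<longrightarrow> Atoms atoms T2 \<subseteq> A2 \<longrightarrow>
        \<psi> \<in> ctr \<phi> \<longrightarrow> \<phi> \<in> hat (T1 \<union> T2) \<longrightarrow> vd (S1 \<union> S2) \<psi> \<longrightarrow>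
        (\<exists>S1' \<phi>1 \<psi>1. S1' \<subseteq> S1 \<and> \<phi>1 \<in> hat T1 \<and> \<psi>1 \<in> ctr \<phi>1 \<and> vd S1' \<psi>1) \<or>
        (\<exists>S2' \<phi>2 \<psi>2. S2' \<subseteq> S2 \<and> \<phi>2 \<in> hat T2 \<and> \<psi>2 \<in> ctr \<phi>2 \<and> vd S2' \<psi>2)"
  using conjunct1[OF conjunct2[OF assms[unfolded pre_relevance_def]]] .

lemma cross:
  assumes st: "setting vd ctr hat" and pr: "pre_relevance atoms vd ctr hat"
    and ind: "indep atoms S S'" and e: "e \<in> Arg vd S'" and d: "d \<in> Arg vd S"
    and att: "attacks ctr hat e d"
  shows "\<exists>\<psi>. vd {} \<psi> \<and> attacks ctr hat ({},\<psi>) d"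
proof -
  obtain Ge ge where ee: "e = (Ge, ge)" by fastforce
  obtain Gd gd where dd: "d = (Gd, gd)" by fastforce
  from att obtain \<phi> where ph: "\<phi> \<in> hat Gd" "ge \<in> ctr \<phi>" unfolding attacks_def ee dd by auto
  from e d have fe: "finite Ge" "Ge \<subseteq> S'" "vd Ge ge" and fd: "finite Gd" "Gd \<subseteq> S"
    unfolding Arg_def ee dd by auto
  note P = prime[OF pr]
  have "(\<exists>S1' \<phi>1 \<psi>1. S1' \<subseteq> {} \<and> \<phi>1 \<in> hat Gd \<and> \<psi>1 \<in> ctr \<phi>1 \<and> vd S1' \<psi>1) \<or>
        (\<exists>S2' \<phi>2 \<psi>2. S2' \<subseteq> Ge \<and> \<phi>2 \<in> hat {} \<and> \<psi>2 \<in> ctr \<phi>2 \<and> vd S2' \<psi>2)"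
    apply (rule P[rule_format, of "Atoms atoms S" "Atoms atoms S'"])
    using ind fe fd ph Atoms_mono[of Gd S atoms] Atoms_mono[of Ge S' atoms]
    by (auto simp: indep_def Atoms_def)
  moreover have "hat {} = {}" using st unfolding setting_def by blast
  ultimately show ?thesis unfolding dd attacks_def by auto
qed

lemma empty_in:
  assumes st: "setting vd ctr hat" and c: "complete_ext vd ctr hat S E" and v: "vd {} \<psi>"
  shows "({},\<psi>) \<in> E"
proof -
  have "hat {} = {}" using st unfolding setting_def by blast
  then have "defends vd ctr hat S E ({},\<psi>)" unfolding defends_def attacks_def by simp
  moreover have "({},\<psi>) \<in> Arg vd S" using v unfolding Arg_def by simp
  ultimately show ?thesis using c unfolding complete_ext_def by blast
qed

lemma split:
  assumes st: "setting vd ctr hat" and pr: "pre_relevance atoms vd ctr hat"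
    and ind: "indep atoms S S'" and c: "c \<in> Arg vd (S \<union> S')" and b: "b \<in> Arg vd (S \<union> S')"
    and att: "attacks ctr hat c b"
  shows "(\<exists>c1 \<in> Arg vd S. fst c1 \<subseteq> fst c \<and> attacks ctr hat c1 b) \<or>
         (\<exists>c2 \<in> Arg vd S'. fst c2 \<subseteq> fst c \<and> attacks ctr hat c2 b)"
proof -
  obtain Gc gc where cc: "c = (Gc, gc)" by fastforce
  obtain Gb gb where bb: "b = (Gb, gb)" by fastforce
  from att obtain \<phi> where ph: "\<phi> \<in> hat Gb" "gc \<in> ctr \<phi>" unfolding attacks_def cc bb by auto
  from c b have fc: "finite Gc" "Gc \<subseteq> S \<union> S'" "vd Gc gc" and fb: "finite Gb" "Gb \<subseteq> S \<union> S'"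
    unfolding Arg_def cc bb by auto
  note P = prime[OF pr]
  have e1: "Gc \<inter> S \<union> Gc \<inter> S' = Gc" "Gb \<inter> S \<union> Gb \<inter> S' = Gb" using fc fb by auto
  have "(\<exists>S1' \<phi>1 \<psi>1. S1' \<subseteq> Gc \<inter> S \<and> \<phi>1 \<in> hat (Gb \<inter> S) \<and> \<psi>1 \<in> ctr \<phi>1 \<and> vd S1' \<psi>1) \<or>
        (\<exists>S2' \<phi>2 \<psi>2. S2' \<subseteq> Gc \<inter> S' \<and> \<phi>2 \<in> hat (Gb \<inter> S') \<and> \<psi>2 \<in> ctr \<phi>2 \<and> vd S2' \<psi>2)"
    apply (rule P[rule_format, of "Atoms atoms S" "Atoms atoms S'" _ _ _ _ gc \<phi>])
    using ind fc fb ph e1 Atoms_mono[of "Gb \<inter> S" S atoms] Atoms_mono[of "Gc \<inter> S" S atoms]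
      Atoms_mono[of "Gb \<inter> S'" S' atoms] Atoms_mono[of "Gc \<inter> S'" S' atoms]
    by (simp_all add: indep_def)
  moreover have h1: "hat (Gb \<inter> S) \<subseteq> hat Gb" "hat (Gb \<inter> S') \<subseteq> hat Gb"
    using hat_mono[OF pr fb(1)] by auto
  moreover have fin: "\<And>X y. vd X y \<Longrightarrow> finite X" using st unfolding setting_def by blast
  ultimately show ?thesis
  proof (elim disjE exE conjE)
    fix S1' \<phi>1 \<psi>1 assume a: "S1' \<subseteq> Gc \<inter> S" "\<phi>1 \<in> hat (Gb \<inter> S)" "\<psi>1 \<in> ctr \<phi>1" "vd S1' \<psi>1"
    have "(S1', \<psi>1) \<in> Arg vd S" using a fin unfolding Arg_def by auto
    moreover have "attacks ctr hat (S1', \<psi>1) b" unfolding attacks_def bb using a h1 by auto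
    ultimately show ?thesis using a cc by auto
  next
    fix S1' \<phi>1 \<psi>1 assume a: "S1' \<subseteq> Gc \<inter> S'" "\<phi>1 \<in> hat (Gb \<inter> S')" "\<psi>1 \<in> ctr \<phi>1" "vd S1' \<psi>1"
    have "(S1', \<psi>1) \<in> Arg vd S'" using a fin unfolding Arg_def by auto
    moreover have "attacks ctr hat (S1', \<psi>1) b" unfolding attacks_def bb using a h1 by auto
    ultimately show ?thesis using a cc by auto
  qed
qed

lemma Arg_mono: "S \<subseteq> T \<Longrightarrow> Arg vd S \<subseteq> Arg vd T"
  unfolding Arg_def by auto

lemma Defended_iff: "a \<in> Defended vd ctr hat U A \<longleftrightarrow>
  a \<in> Arg vd U \<and> (\<forall>b\<in>Arg vd U. attacks ctr hat b a \<longrightarrow> (\<exists>c\<in>A. attacks ctr hat c b))"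
  unfolding Defended_def defends_def by auto

lemma Arg_fin: "a \<in> Arg vd S \<Longrightarrow> finite (fst a)"
  unfolding Arg_def by auto

lemma lift:
  assumes st: "setting vd ctr hat" and pr: "pre_relevance atoms vd ctr hat"
    and ind: "indep atoms S S'"
    and c1: "complete_ext vd ctr hat S E1" and c2: "complete_ext vd ctr hat S' E2"
    and c: "c \<in> Defended vd ctr hat (S \<union> S') (E1 \<union> E2)"
    and a: "a \<in> Arg vd S" and sub: "fst a \<subseteq> fst c"
  shows "a \<in> E1"
proof -
  have cA: "c \<in> Arg vd (S \<union> S')" and cD: "\<forall>b\<in>Arg vd (S \<union> S'). attacks ctr hat b c \<longrightarrow> (\<exists>e\<in>E1 \<union> E2. attacks ctr hat e b)"
    using c unfolding Defended_iff by auto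
  have "defends vd ctr hat S E1 a"
    unfolding defends_def
  proof (intro ballI impI)
    fix d assume d: "d \<in> Arg vd S" and att: "attacks ctr hat d a"
    have "attacks ctr hat d c" using att_mono[OF pr Arg_fin[OF cA] sub att] .
    moreover have "d \<in> Arg vd (S \<union> S')" using d Arg_mono[of S "S \<union> S'" vd] by auto
    ultimately obtain e where e: "e \<in> E1 \<union> E2" "attacks ctr hat e d" using cD by blast
    show "\<exists>e\<in>E1. attacks ctr hat e d"
    proof (cases "e \<in> E1")
      case True then show ?thesis using e by blast
    next
      case False
      then have "e \<in> Arg vd S'" using e c2 unfolding complete_ext_def by auto
      then obtain \<psi> where "vd {} \<psi>" "attacks ctr hat ({},\<psi>) d" using cross[OF st pr ind _ d e(2)] by blast
      then show ?thesis using empty_in[OF st c1] by blast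
    qed
  qed
  then show ?thesis using c1 a unfolding complete_ext_def by blast
qed

lemma side:
  assumes st: "setting vd ctr hat" and pr: "pre_relevance atoms vd ctr hat"
    and ind: "indep atoms S S'"
    and c1: "complete_ext vd ctr hat S E1" and c2: "complete_ext vd ctr hat S' E2"
  shows "Defended vd ctr hat (S \<union> S') (E1 \<union> E2) \<inter> Arg vd S = E1"
proof
  have E1A: "E1 \<subseteq> Arg vd S" and cf1: "conflict_free ctr hat E1"
    and d1: "\<forall>a\<in>E1. defends vd ctr hat S E1 a"
    and cl1: "\<forall>a\<in>Arg vd S. defends vd ctr hat S E1 a \<longrightarrow> a \<in> E1"
    using c1 unfolding complete_ext_def by auto
  have E2A: "E2 \<subseteq> Arg vd S'" using c2 unfolding complete_ext_def by auto
  have AS: "Arg vd S \<subseteq> Arg vd (S \<union> S')" by (rule Arg_mono) auto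
  show "E1 \<subseteq> Defended vd ctr hat (S \<union> S') (E1 \<union> E2) \<inter> Arg vd S"
  proof
    fix a assume a: "a \<in> E1"
    have "a \<in> Defended vd ctr hat (S \<union> S') (E1 \<union> E2)"
      unfolding Defended_iff
    proof (intro conjI ballI impI)
      show "a \<in> Arg vd (S \<union> S')" using a E1A AS by auto
      fix b assume b: "b \<in> Arg vd (S \<union> S')" and att: "attacks ctr hat b a"
      have aU: "a \<in> Arg vd (S \<union> S')" using a E1A AS by auto
      from split[OF st pr ind b aU att]
      show "\<exists>c\<in>E1 \<union> E2. attacks ctr hat c b"
      proof (elim disjE bexE conjE)
        fix c1 assume "c1 \<in> Arg vd S" "fst c1 \<subseteq> fst b" "attacks ctr hat c1 a"
        then obtain e where "e \<in> E1" "attacks ctr hat e c1" using d1 a unfolding defends_def by blast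
        then show ?thesis using att_mono[OF pr Arg_fin[OF b] \<open>fst c1 \<subseteq> fst b\<close>] by blast
      next
        fix c2 assume "c2 \<in> Arg vd S'" "fst c2 \<subseteq> fst b" "attacks ctr hat c2 a"
        then obtain \<psi> where "vd {} \<psi>" "attacks ctr hat ({},\<psi>) a"
          using cross[OF st pr ind _ _] a E1A by blast
        then show ?thesis using empty_in[OF st c1] cf1 a unfolding conflict_free_def by blast
      qed
    qed
    then show "a \<in> Defended vd ctr hat (S \<union> S') (E1 \<union> E2) \<inter> Arg vd S" using a E1A by auto
  qed
  show "Defended vd ctr hat (S \<union> S') (E1 \<union> E2) \<inter> Arg vd S \<subseteq> E1"
  proof
    fix a assume a: "a \<in> Defended vd ctr hat (S \<union> S') (E1 \<union> E2) \<inter> Arg vd S"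
    then show "a \<in> E1" using lift[OF st pr ind c1 c2, of a a] by auto
  qed
qed

lemma key:
  assumes st: "setting vd ctr hat" and pr: "pre_relevance atoms vd ctr hat"
    and ind: "indep atoms S S'"
    and c1: "complete_ext vd ctr hat S E1" and c2: "complete_ext vd ctr hat S' E2"
    and c: "c \<in> Defended vd ctr hat (S \<union> S') (E1 \<union> E2)"
    and b: "b \<in> Arg vd (S \<union> S')" and att: "attacks ctr hat c b"
  shows "\<exists>e\<in>E1 \<union> E2. attacks ctr hat e b"
proof -
  have ind': "indep atoms S' S" using ind unfolding indep_def by auto
  have c': "c \<in> Defended vd ctr hat (S' \<union> S) (E2 \<union> E1)" using c by (simp add: Un_commute)
  have cA: "c \<in> Arg vd (S \<union> S')" using c unfolding Defended_iff by auto
  from split[OF st pr ind cA b att] show ?thesis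
  proof (elim disjE bexE conjE)
    fix x assume "x \<in> Arg vd S" "fst x \<subseteq> fst c" "attacks ctr hat x b"
    then show ?thesis using lift[OF st pr ind c1 c2 c] by blast
  next
    fix x assume "x \<in> Arg vd S'" "fst x \<subseteq> fst c" "attacks ctr hat x b"
    then show ?thesis using lift[OF st pr ind' c2 c1 c'] by blast
  qed
qed

theorem lemma6:
  fixes atoms :: "'f \<Rightarrow> 'a set"
    and vd :: "'f set \<Rightarrow> 'f \<Rightarrow> bool"
    and ctr :: "'f \<Rightarrow> 'f set"
    and hat :: "'f set \<Rightarrow> 'f set"
    and S S' :: "'f set"
    and E1 E2 E :: "'f arg set"
  assumes "setting vd ctr hat"
    and "pre_relevance atoms vd ctr hat"
    and "indep atoms S S'"
    and "complete_ext vd ctr hat S E1"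
    and "complete_ext vd ctr hat S' E2"
    and "E = Defended vd ctr hat (S \<union> S') (E1 \<union> E2)"
  shows "E \<inter> Arg vd S = E1 \<and> E \<inter> Arg vd S' = E2 \<and> complete_ext vd ctr hat (S \<union> S') E"
proof -
  note st = assms(1) and pr = assms(2) and ind = assms(3) and c1 = assms(4) and c2 = assms(5)
  have ind': "indep atoms S' S" using ind unfolding indep_def by auto
  have Eeq: "E = Defended vd ctr hat (S' \<union> S) (E2 \<union> E1)" using assms(6) by (simp add: Un_commute)
  have p1: "E \<inter> Arg vd S = E1" using side[OF st pr ind c1 c2] assms(6) by simp
  have p2: "E \<inter> Arg vd S' = E2" using side[OF st pr ind' c2 c1] Eeq by simp
  have AE: "E1 \<union> E2 \<subseteq> E" using p1 p2 by auto
  have E1A: "E1 \<subseteq> Arg vd S" and E2A: "E2 \<subseteq> Arg vd S'"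
    and cf1: "conflict_free ctr hat E1" and cf2: "conflict_free ctr hat E2"
    using c1 c2 unfolding complete_ext_def by auto
  have EA: "E \<subseteq> Arg vd (S \<union> S')" using assms(6) unfolding Defended_def by auto
  have Edef: "\<And>a b. a \<in> E \<Longrightarrow> b \<in> Arg vd (S \<union> S') \<Longrightarrow> attacks ctr hat b a \<Longrightarrow>
      \<exists>c\<in>E1 \<union> E2. attacks ctr hat c b"
    using assms(6) Defended_iff[of _ vd ctr hat "S \<union> S'" "E1 \<union> E2"] by blast
  have cfA: "conflict_free ctr hat (E1 \<union> E2)"
    unfolding conflict_free_def
  proof (intro ballI notI)
    fix a b assume a: "a \<in> E1 \<union> E2" and b: "b \<in> E1 \<union> E2" and att: "attacks ctr hat a b"
    show False
    proof (cases "a \<in> E1")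
      case True
      show False
      proof (cases "b \<in> E1")
        case True then show False using \<open>a \<in> E1\<close> att cf1 unfolding conflict_free_def by blast
      next
        case False
        then have bE: "b \<in> E2" using b by auto
        obtain \<psi> where "vd {} \<psi>" "attacks ctr hat ({},\<psi>) b"
          using cross[OF st pr ind' _ _ att] \<open>a \<in> E1\<close> bE E1A E2A by blast
        then show False using empty_in[OF st c2] cf2 bE unfolding conflict_free_def by blast
      qed
    next
      case False
      then have aE: "a \<in> E2" using a by auto
      show False
      proof (cases "b \<in> E1")
        case True
        obtain \<psi> where "vd {} \<psi>" "attacks ctr hat ({},\<psi>) b"
          using cross[OF st pr ind _ _ att] True aE E1A E2A by blast
        then show False using empty_in[OF st c1] cf1 True unfolding conflict_free_def by blast
      next
        case False
        then show False using aE b att cf2 unfolding conflict_free_def by blast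
      qed
    qed
  qed
  have AA: "E1 \<union> E2 \<subseteq> Arg vd (S \<union> S')" using AE EA by auto
  have cfE: "conflict_free ctr hat E"
    unfolding conflict_free_def
  proof (intro ballI notI)
    fix a b assume a: "a \<in> E" and b: "b \<in> E" and att: "attacks ctr hat a b"
    obtain c where c: "c \<in> E1 \<union> E2" "attacks ctr hat c a" using Edef[OF b _ att] a EA by blast
    obtain d where d: "d \<in> E1 \<union> E2" "attacks ctr hat d c" using Edef[OF a _ c(2)] c(1) AA by blast
    show False using cfA c d unfolding conflict_free_def by blast
  qed
  have dE: "\<forall>a\<in>E. defends vd ctr hat (S \<union> S') E a"
    unfolding defends_def using Edef AE by blast
  have clE: "\<forall>a\<in>Arg vd (S \<union> S'). defends vd ctr hat (S \<union> S') E a \<longrightarrow> a \<in> E"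
  proof (intro ballI impI)
    fix a assume a: "a \<in> Arg vd (S \<union> S')" and df: "defends vd ctr hat (S \<union> S') E a"
    have "defends vd ctr hat (S \<union> S') (E1 \<union> E2) a"
      unfolding defends_def
    proof (intro ballI impI)
      fix b assume b: "b \<in> Arg vd (S \<union> S')" and att: "attacks ctr hat b a"
      obtain c where c: "c \<in> E" "attacks ctr hat c b" using df b att unfolding defends_def by blast
      show "\<exists>c\<in>E1 \<union> E2. attacks ctr hat c b"
        using key[OF st pr ind c1 c2 _ b c(2)] c(1) assms(6) by blast
    qed
    then show "a \<in> E" using a assms(6) unfolding Defended_def by blast
  qed
  show ?thesis using p1 p2 EA cfE dE clE unfolding complete_ext_def by blast
qed

end
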